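(* Let $\mathcal{X}$ be a countable set and $\mathcal{D}$ a distribution on $\mathcal{X}\times\{0,1\}$. Fix any two models $f_1,f_2:\mathcal{X}\to[0,1]$ and any $\epsilon>0$. If $\mu(U_\epsilon(f_1,f_2))=\alpha$, then for some $\bullet\in\{>,<\}$ and some $i\in\{1,2\}$, $$\mu(U^\bullet_\epsilon(f_1,f_2))\cdot\big(v_*^\bullet-v_i^\bullet\big)^2\ge\frac{\alpha\epsilon^2}{8},$$ where $v_*^\bullet=\mathbb{E}_{(x,y)\sim\mathcal{D}}[y\mid x\in U^\bullet_\epsilon(f_1,f_2)]$ and $v_i^\bullet=\mathbb{E}_{(x,y)\sim\mathcal{D}}[f_i(x)\mid x\in U^\bullet_\epsilon(f_1,f_2)]$.
   Context: For a set $S\subseteq\mathcal{X}$, $\mu(S)=\Pr_{(x,y)\sim\mathcal{D}}[x\in S]$. $U_\epsilon(f_1,f_2)=\{x:|f_1(x)-f_2(x)|>\epsilon\}$, $U^>_\epsilon(f_1,f_2)=\{x\in U_\epsilon(f_1,f_2):f_1(x)>f_2(x)\}$, $U^<_\epsilon(f_1,f_2)=\{x\in U_\epsilon(f_1,f_2):f_1(x)<f_2(x)\}$. When a set has mass zero the product $\mu(\cdot)\cdot(\cdot)^2$ is taken to be $0$. *)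

theory Defs
  imports "HOL-Probability.Probability"
begin

text \<open>The distribution D is a pmf on X \<times> {0,1}; the label y is a bool, read as 0/1.\<close>

definition mu :: "('a \<times> bool) pmf \<Rightarrow> 'a set \<Rightarrow> real" where
  "mu D S = measure_pmf.prob D {p. fst p \<in> S}"

text \<open>Conditional expectation E[g(x,y) | x \<in> S]; arbitrary (0) when mu S = 0.\<close>
definition cond_exp :: "('a \<times> bool) pmf \<Rightarrow> 'a set \<Rightarrow> ('a \<times> bool \<Rightarrow> real) \<Rightarrow> real" where
  "cond_exp D S g = (if mu D S = 0 then 0
     else measure_pmf.expectation D (\<lambda>p. indicator S (fst p) * g p) / mu D S)"

definition U :: "real \<Rightarrow> ('a \<Rightarrow> real) \<Rightarrow> ('a \<Rightarrow> real) \<Rightarrow> 'a set" where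
  "U eps f1 f2 = {x. \<bar>f1 x - f2 x\<bar> > eps}"

definition U_gt :: "real \<Rightarrow> ('a \<Rightarrow> real) \<Rightarrow> ('a \<Rightarrow> real) \<Rightarrow> 'a set" where
  "U_gt eps f1 f2 = {x \<in> U eps f1 f2. f1 x > f2 x}"

definition U_lt :: "real \<Rightarrow> ('a \<Rightarrow> real) \<Rightarrow> ('a \<Rightarrow> real) \<Rightarrow> 'a set" where
  "U_lt eps f1 f2 = {x \<in> U eps f1 f2. f1 x < f2 x}"

text \<open>mu(S) * (v_* - v_f)^2 with v_* = E[y | x\<in>S], v_f = E[f(x) | x\<in>S]; taken to be 0 when mu(S) = 0.\<close>
definition gap_term :: "('a \<times> bool) pmf \<Rightarrow> 'a set \<Rightarrow> ('a \<Rightarrow> real) \<Rightarrow> real" where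
  "gap_term D S f = (if mu D S = 0 then 0 else
     mu D S * (cond_exp D S (\<lambda>p. of_bool (snd p)) - cond_exp D S (\<lambda>p. f (fst p)))\<^sup>2)"

end

theory Submission
  imports Defs
begin

lemma integ_bounded:
  fixes g :: "'a \<times> bool \<Rightarrow> real"
  assumes "\<And>p. \<bar>g p\<bar> \<le> B"
  shows "integrable (measure_pmf D) g"
  by (rule measure_pmf.integrable_const_bound[where B=B]) (auto simp: assms)

lemma exp_ind:
  "measure_pmf.expectation D (\<lambda>p. indicator S (fst p) :: real) = mu D S"
proof -
  have "(\<lambda>p. indicator S (fst p) :: real) = indicator {p. fst p \<in> S}"
    by (auto simp: indicator_def)
  moreover have "measure_pmf.expectation D (indicator {p. fst p \<in> S} :: _ \<Rightarrow> real) = mu D S"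
    unfolding mu_def Bochner_Integration.integral_indicator by simp
  ultimately show ?thesis by metis
qed

lemma cond_diff:
  fixes g h :: "'a \<Rightarrow> real"
  assumes pos: "mu D S > 0"
    and le: "\<And>x. x \<in> S \<Longrightarrow> h x + c \<le> g x"
    and bg: "\<And>x. \<bar>g x\<bar> \<le> 1" and bh: "\<And>x. \<bar>h x\<bar> \<le> 1"
  shows "cond_exp D S (\<lambda>p. g (fst p)) - cond_exp D S (\<lambda>p. h (fst p)) \<ge> c"
proof -
  let ?E = "measure_pmf.expectation D"
  have ig: "integrable (measure_pmf D) (\<lambda>p. indicator S (fst p) * g (fst p))"
    by (rule integ_bounded[where B=1]) (auto simp: indicator_def bg abs_mult)
  have ih: "integrable (measure_pmf D) (\<lambda>p. indicator S (fst p) * h (fst p))"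
    by (rule integ_bounded[where B=1]) (auto simp: indicator_def bh abs_mult)
  have ii: "integrable (measure_pmf D) (\<lambda>p. indicator S (fst p) :: real)"
    by (rule integ_bounded[where B=1]) (auto simp: indicator_def)
  have ii2: "integrable (measure_pmf D) (\<lambda>p. c * indicator S (fst p) :: real)"
    using ii by simp
  have "?E (\<lambda>p. indicator S (fst p) * h (fst p) + c * indicator S (fst p))
        \<le> ?E (\<lambda>p. indicator S (fst p) * g (fst p))"
    using le by (intro integral_mono Bochner_Integration.integrable_add ih ig ii2)
      (auto simp: indicator_def)
  also have "?E (\<lambda>p. indicator S (fst p) * h (fst p) + c * indicator S (fst p))
       = ?E (\<lambda>p. indicator S (fst p) * h (fst p)) + c * mu D S"
    using Bochner_Integration.integral_add[OF ih ii2]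
      Bochner_Integration.integral_mult_right[of c "measure_pmf D" "\<lambda>p. indicator S (fst p) :: real"]
    using ii by (simp add: exp_ind)
  finally have *: "?E (\<lambda>p. indicator S (fst p) * h (fst p)) + c * mu D S
        \<le> ?E (\<lambda>p. indicator S (fst p) * g (fst p))" .
  have "cond_exp D S (\<lambda>p. g (fst p)) - cond_exp D S (\<lambda>p. h (fst p))
     = (?E (\<lambda>p. indicator S (fst p) * g (fst p)) - ?E (\<lambda>p. indicator S (fst p) * h (fst p))) / mu D S"
    using pos by (simp add: cond_exp_def diff_divide_distrib)
  also have "\<dots> \<ge> c" using * pos by (simp add: le_divide_eq mult.commute)
  finally show ?thesis .
qed

lemma gap_nonneg: "gap_term D S f \<ge> 0"
  by (simp add: gap_term_def mu_def)

lemma sq_lemma: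
  fixes a b1 b2 e :: real
  assumes "b1 - b2 \<ge> e" "e > 0"
  shows "(a - b1)\<^sup>2 \<ge> e\<^sup>2/4 \<or> (a - b2)\<^sup>2 \<ge> e\<^sup>2/4"
proof -
  have "\<bar>a - b1\<bar> \<ge> e/2 \<or> \<bar>a - b2\<bar> \<ge> e/2" using assms by linarith
  then show ?thesis
  proof
    assume h: "\<bar>a - b1\<bar> \<ge> e/2"
    have "(e/2)\<^sup>2 \<le> \<bar>a - b1\<bar>\<^sup>2" using h assms by (intro power_mono) auto
    then show ?thesis by (simp add: power_divide)
  next
    assume h: "\<bar>a - b2\<bar> \<ge> e/2"
    have "(e/2)\<^sup>2 \<le> \<bar>a - b2\<bar>\<^sup>2" using h assms by (intro power_mono) auto
    then show ?thesis by (simp add: power_divide)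
  qed
qed

lemma gap_bound:
  assumes m: "mu D S \<ge> alpha/2" "alpha > 0"
    and sq: "(cond_exp D S (\<lambda>p. of_bool (snd p)) - cond_exp D S (\<lambda>p. f (fst p)))\<^sup>2 \<ge> eps\<^sup>2/4"
  shows "gap_term D S f \<ge> alpha * eps\<^sup>2 / 8"
proof -
  have pos: "mu D S \<noteq> 0" using m by auto
  have "alpha * eps\<^sup>2 / 8 = (alpha/2) * (eps\<^sup>2/4)" by simp
  also have "\<dots> \<le> mu D S * (cond_exp D S (\<lambda>p. of_bool (snd p)) - cond_exp D S (\<lambda>p. f (fst p)))\<^sup>2"
    using m sq by (intro mult_mono) auto
  finally show ?thesis using pos by (simp add: gap_term_def)
qed

theorem lemma2:
  fixes D :: "('a::countable \<times> bool) pmf"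
    and f1 f2 :: "'a \<Rightarrow> real"
    and eps alpha :: real
  assumes f1_range: "\<And>x. f1 x \<in> {0..1}"
    and f2_range: "\<And>x. f2 x \<in> {0..1}"
    and eps_pos: "eps > 0"
    and alpha_def: "mu D (U eps f1 f2) = alpha"
  shows "\<exists>S \<in> {U_gt eps f1 f2, U_lt eps f1 f2}. \<exists>f \<in> {f1, f2}.
           gap_term D S f \<ge> alpha * eps\<^sup>2 / 8"
proof (cases "alpha > 0")
  case False
  have "alpha \<ge> 0" using alpha_def unfolding mu_def by (metis measure_nonneg)
  then have "alpha = 0" using False by simp
  then show ?thesis using gap_nonneg by auto
next
  case apos: True
  have b1: "\<And>x. \<bar>f1 x\<bar> \<le> 1" and b2: "\<And>x. \<bar>f2 x\<bar> \<le> 1"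
    using f1_range f2_range by (auto simp: abs_le_iff)
  have split: "{p. fst p \<in> U eps f1 f2} = {p. fst p \<in> U_gt eps f1 f2} \<union> {p. fst p \<in> U_lt eps f1 f2}"
    using eps_pos by (auto simp: U_def U_gt_def U_lt_def abs_if split: if_splits)
  have disj: "{p. fst p \<in> U_gt eps f1 f2} \<inter> {p. fst p \<in> U_lt eps f1 f2} = {}"
    by (auto simp: U_gt_def U_lt_def)
  have sum: "alpha = mu D (U_gt eps f1 f2) + mu D (U_lt eps f1 f2)"
    unfolding alpha_def[symmetric] mu_def split
    by (rule measure_pmf.finite_measure_Union) (use disj in auto)
  let ?v = "\<lambda>S. cond_exp D S (\<lambda>p. of_bool (snd p))"
  show ?thesis
  proof (cases "mu D (U_gt eps f1 f2) \<ge> alpha/2")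
    case True
    let ?S = "U_gt eps f1 f2"
    have "cond_exp D ?S (\<lambda>p. f1 (fst p)) - cond_exp D ?S (\<lambda>p. f2 (fst p)) \<ge> eps"
      using True apos b1 b2 by (intro cond_diff) (auto simp: U_gt_def U_def)
    from sq_lemma[OF this eps_pos, of "?v ?S"] gap_bound[OF True apos]
    show ?thesis by blast
  next
    case False
    let ?S = "U_lt eps f1 f2"
    have T: "mu D ?S \<ge> alpha/2" using False sum by linarith
    have "cond_exp D ?S (\<lambda>p. f2 (fst p)) - cond_exp D ?S (\<lambda>p. f1 (fst p)) \<ge> eps"
      using T apos b1 b2 by (intro cond_diff) (auto simp: U_lt_def U_def)
    from sq_lemma[OF this eps_pos, of "?v ?S"] gap_bound[OF T apos]
    show ?thesis by blast
  qed
qed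

end
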